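(* Let $d\ge2$ and let $\{T(e)\}$ be i.i.d. with values in $[0,\infty]$ and common law $\mathcal{L}$ on the edges of $\mathbb{Z}^d$. Assume $\mathcal{L}(\{0\})<p_c$. Then with probability one, for all $x,y\in\mathbb{Z}^d$ with $(x,y)\in\mathfrak{C}$, there exists a geodesic between $x$ and $y$.
   Context: $p_c$ is the critical probability of Bernoulli bond percolation on $\mathbb{Z}^d$. Passage time of a path is the sum of the passage times of its edges; $t(x,y)=\inf\{T(\pi):\pi\text{ path from }x\text{ to }y\}$; $\mathfrak{C}=\{(x,y):t(x,y)<\infty\}$. A geodesic between $x$ and $y$ is a self-avoiding path $\gamma$ from $x$ to $y$ with $T(\gamma)=t(x,y)$. *)

theory Defs
  imports "HOL-Probability.Probability"
begin

text \<open>The lattice Z^d, with d = CARD('d), vertices int ^ 'd.\<close>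

definition lattice_adj :: "int ^ ('d::finite) \<Rightarrow> int ^ 'd \<Rightarrow> bool" where
  "lattice_adj x y \<longleftrightarrow> (\<Sum>i\<in>UNIV. \<bar>x $ i - y $ i\<bar>) = 1"

definition lattice_edges :: "(int ^ 'd) set set" where
  "lattice_edges = {{x, y} | x y. lattice_adj x y}"

definition lattice_path :: "(int ^ 'd) list \<Rightarrow> int ^ 'd \<Rightarrow> int ^ 'd \<Rightarrow> bool" where
  "lattice_path p x y \<longleftrightarrow> p \<noteq> [] \<and> hd p = x \<and> last p = y \<and>
     (\<forall>(u, v) \<in> set (zip p (tl p)). lattice_adj u v)"

definition path_edges :: "(int ^ 'd) list \<Rightarrow> (int ^ 'd) set list" where
  "path_edges p = map (\<lambda>(u, v). {u, v}) (zip p (tl p))"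

definition open_cluster :: "((int ^ 'd) set \<Rightarrow> bool) \<Rightarrow> (int ^ 'd) set" where
  "open_cluster \<omega> = {y. \<exists>p. lattice_path p 0 y \<and> (\<forall>e \<in> set (path_edges p). \<omega> e)}"

definition bond_perc_measure :: "('d::finite) itself \<Rightarrow> real \<Rightarrow> ((int ^ 'd) set \<Rightarrow> bool) measure" where
  "bond_perc_measure _ p = PiM (lattice_edges :: (int ^ 'd) set set) (\<lambda>_. measure_pmf (bernoulli_pmf p))"

definition perc_prob :: "('d::finite) itself \<Rightarrow> real \<Rightarrow> real" where
  "perc_prob d p = measure (bond_perc_measure d p)
      {\<omega> \<in> space (bond_perc_measure d p). infinite (open_cluster (\<omega> :: (int ^ 'd) set \<Rightarrow> bool))}"

definition crit_prob :: "('d::finite) itself \<Rightarrow> real" where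
  "crit_prob d = Sup {p. 0 \<le> p \<and> p \<le> 1 \<and> perc_prob d p = 0}"

definition path_time :: "((int ^ 'd) set \<Rightarrow> ennreal) \<Rightarrow> (int ^ 'd) list \<Rightarrow> ennreal" where
  "path_time T p = sum_list (map T (path_edges p))"

definition passage_time :: "((int ^ 'd) set \<Rightarrow> ennreal) \<Rightarrow> int ^ 'd \<Rightarrow> int ^ 'd \<Rightarrow> ennreal" where
  "passage_time T x y = (INF p \<in> {p. lattice_path p x y}. path_time T p)"

definition geodesic :: "((int ^ 'd) set \<Rightarrow> ennreal) \<Rightarrow> (int ^ 'd) list \<Rightarrow> int ^ 'd \<Rightarrow> int ^ 'd \<Rightarrow> bool" where
  "geodesic T g x y \<longleftrightarrow> lattice_path g x y \<and> distinct g \<and> path_time T g = passage_time T x y"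

end

theory Submission
  imports Defs
begin
lemma succ_zip: "(\<forall>(u, v) \<in> set (zip p (tl p)). P u v) \<longleftrightarrow> successively P p"
proof (induction p)
  case Nil then show ?case by simp
next
  case (Cons a p) then show ?case by (cases p) auto
qed

lemma lattice_path_succ: "lattice_path p x y \<longleftrightarrow> p \<noteq> [] \<and> hd p = x \<and> last p = y \<and> successively lattice_adj p"
  unfolding lattice_path_def succ_zip ..

lemma path_edges_simps[simp]: "path_edges [] = []" "path_edges [x] = []"
  "path_edges (x # u # r) = {x, u} # path_edges (u # r)"
  by (simp_all add: path_edges_def)

lemma path_edges_Cons: "path_edges (u # r) = (if r = [] then [] else {u, hd r} # path_edges r)"
  by (cases r) auto

lemma path_edges_append: "path_edges (a @ v # b) = path_edges (a @ [v]) @ path_edges (v # b)"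
proof (induction a)
  case Nil then show ?case by simp
next
  case (Cons a1 a) then show ?case
    by (cases a) auto
qed

lemma path_edges_map: "path_edges (map f p) = map (\<lambda>e. f ` e) (path_edges p)"
proof (induction p)
  case Nil then show ?case by simp
next
  case (Cons a p) then show ?case by (cases p) auto
qed

lemma lattice_adj_sym: "lattice_adj x y \<longleftrightarrow> lattice_adj y x"
  unfolding lattice_adj_def by (simp add: abs_minus_commute)

lemma lattice_adj_shift: "lattice_adj (x + a) (y + a) \<longleftrightarrow> lattice_adj x y"
  unfolding lattice_adj_def by simp

lemma path_edges_in: "successively lattice_adj p \<Longrightarrow> set (path_edges p) \<subseteq> lattice_edges"
proof (induction p)
  case Nil then show ?case by simp
next
  case (Cons a p) then show ?case by (cases p) (auto simp: lattice_edges_def)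
qed

lemma lattice_path_edges_in: "lattice_path p x y \<Longrightarrow> set (path_edges p) \<subseteq> lattice_edges"
  using path_edges_in lattice_path_succ by blast

lemma lattice_path_Cons: "lattice_path p u y \<Longrightarrow> lattice_adj x u \<Longrightarrow> lattice_path (x # p) x y"
  unfolding lattice_path_succ by (cases p) auto

lemma lattice_path_Cons_hd: "lattice_path p u y \<Longrightarrow> path_edges (x # p) = {x, u} # path_edges p"
  unfolding lattice_path_succ by (cases p) auto

lemma lattice_path_single: "lattice_path [x] x x"
  unfolding lattice_path_succ by simp

lemma nbrs_finite: "finite {u. lattice_adj (v :: int ^ 'd) u}"
proof -
  have "{u. lattice_adj v u} \<subseteq> vec_lambda ` (PiE UNIV (\<lambda>i. {v$i - 1 .. v$i + 1}))"
  proof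
    fix u assume "u \<in> {u. lattice_adj v u}"
    then have s: "(\<Sum>i\<in>UNIV. \<bar>v $ i - u $ i\<bar>) = 1" by (simp add: lattice_adj_def)
    have b: "\<bar>v $ i - u $ i\<bar> \<le> 1" for i
      using member_le_sum[of i UNIV "\<lambda>i. \<bar>v $ i - u $ i\<bar>"] s by simp
    have "u $ i \<in> {v$i - 1 .. v$i + 1}" for i
    proof -
      have "\<bar>v $ i - u $ i\<bar> \<le> 1" by (rule b)
      then show ?thesis by (simp add: abs_le_iff)
    qed
    then have "(\<lambda>i. u $ i) \<in> PiE UNIV (\<lambda>i. {v$i - 1 .. v$i + 1})" by auto
    then show "u \<in> vec_lambda ` (PiE UNIV (\<lambda>i. {v$i - 1 .. v$i + 1}))"
      by (intro image_eqI[where x="\<lambda>i. u $ i"]) auto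
  qed
  moreover have "finite (PiE (UNIV::'d set) (\<lambda>i. {v$i - 1 .. v$i + 1}))"
    by (intro finite_PiE) auto
  ultimately show ?thesis using finite_subset by blast
qed

lemma path_time_append: "path_time w (a @ v # b) = path_time w (a @ [v]) + path_time w (v # b)"
  unfolding path_time_def by (subst path_edges_append) simp

lemma loop_erase:
  assumes "lattice_path p x y"
  shows "\<exists>g. lattice_path g x y \<and> distinct g \<and> set g \<subseteq> set p \<and> path_time w g \<le> path_time w p"
  using assms
proof (induction "length p" arbitrary: p rule: less_induct)
  case less
  show ?case
  proof (cases "distinct p")
    case True then show ?thesis using less.prems by blast
  next
    case False
    then obtain xs v ys zs where p: "p = xs @ [v] @ ys @ [v] @ zs"
      using not_distinct_decomp by blast
    define g where "g = xs @ v # zs"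
    have len: "length g < length p" unfolding g_def p by simp
    have sp: "successively lattice_adj p" "hd p = x" "last p = y"
      using less.prems unfolding lattice_path_succ by auto
    have s1: "successively lattice_adj (xs @ [v])"
    proof -
      have "p = (xs @ [v]) @ (ys @ [v] @ zs)" by (simp add: p)
      then show ?thesis using sp(1) successively_append_iff by metis
    qed
    have s2: "successively lattice_adj (v # zs)"
    proof -
      have "p = (xs @ v # ys) @ (v # zs)" by (simp add: p)
      then show ?thesis using sp(1) successively_append_iff by metis
    qed
    have "successively lattice_adj g"
      using s1 s2 unfolding g_def
      by (cases xs rule: rev_cases) (simp_all add: successively_append_iff)
    moreover have "hd g = x" using sp(2) unfolding g_def p by (cases xs) auto
    moreover have "last g = y" using sp(3) unfolding g_def p by (cases zs) auto
    ultimately have lg: "lattice_path g x y" unfolding lattice_path_succ g_def by simp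
    have "path_time w p = path_time w (xs @ [v]) + path_time w (v # ys @ [v]) + path_time w (v # zs)"
      unfolding p
      using path_time_append[of w xs v "ys @ v # zs"] path_time_append[of w "v # ys" v zs]
      by (simp add: add.assoc)
    moreover have "path_time w g = path_time w (xs @ [v]) + path_time w (v # zs)"
      unfolding g_def by (rule path_time_append)
    moreover have "path_time w (xs @ [v]) \<le> path_time w (xs @ [v]) + path_time w (v # ys @ [v])"
      by (rule add_increasing2) auto
    ultimately have tle: "path_time w g \<le> path_time w p"
      by (metis add_right_mono)
    have sg: "set g \<subseteq> set p" unfolding g_def p by auto
    from less.hyps[OF len lg] obtain h where
      "lattice_path h x y \<and> distinct h \<and> set h \<subseteq> set g \<and> path_time w h \<le> path_time w g" by blast
    then show ?thesis using tle sg by (meson order_trans)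
  qed
qed

definition ocl :: "((int ^ 'd) set \<Rightarrow> bool) \<Rightarrow> int ^ 'd \<Rightarrow> (int ^ 'd::finite) set" where
  "ocl \<omega> x = {y. \<exists>p. lattice_path p x y \<and> (\<forall>e \<in> set (path_edges p). \<omega> e)}"

lemma ocl_self: "x \<in> ocl \<omega> x"
  unfolding ocl_def using lattice_path_single by fastforce

lemma ocl_prepend:
  assumes "y \<in> ocl \<omega> u" "lattice_adj x u" "\<omega> {x, u}"
  shows "y \<in> ocl \<omega> x"
proof -
  from assms(1) obtain p where p: "lattice_path p u y" "\<forall>e \<in> set (path_edges p). \<omega> e"
    unfolding ocl_def by blast
  have "lattice_path (x # p) x y" using lattice_path_Cons[OF p(1) assms(2)] .
  moreover have "\<forall>e \<in> set (path_edges (x # p)). \<omega> e"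
    using p assms(3) lattice_path_Cons_hd[OF p(1)] by simp
  ultimately show ?thesis unfolding ocl_def by blast
qed

lemma ocl_eq:
  assumes "lattice_adj x u" "\<omega> {x, u}"
  shows "ocl \<omega> u = ocl \<omega> x"
proof
  show "ocl \<omega> u \<subseteq> ocl \<omega> x" using ocl_prepend assms by blast
  have "lattice_adj u x" "\<omega> {u, x}" using assms lattice_adj_sym by (auto simp: insert_commute)
  then show "ocl \<omega> x \<subseteq> ocl \<omega> u" using ocl_prepend by blast
qed

fun Rr :: "(int ^ 'd \<Rightarrow> (int ^ 'd) set) \<Rightarrow> nat \<Rightarrow> (int ^ 'd::finite) set \<Rightarrow> (int ^ 'd) set" where
  "Rr cl 0 C = C"
| "Rr cl (Suc n) C = Rr cl n C \<union> (\<Union>v\<in>C. \<Union>u\<in>{u. lattice_adj v u}. Rr cl n (cl u))"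

lemma Rr_finite: "(\<And>u. finite (cl u)) \<Longrightarrow> finite C \<Longrightarrow> finite (Rr cl n C)"
proof (induction n arbitrary: C)
  case 0 then show ?case by simp
next
  case (Suc n)
  have "finite (\<Union>v\<in>C. \<Union>u\<in>{u. lattice_adj v u}. Rr cl n (cl u))"
    using Suc nbrs_finite by (intro finite_UN_I) auto
  then show ?case using Suc by simp
qed

lemma Rr_base: "C \<subseteq> Rr cl n C"
  by (induction n) auto

lemma Rr_mono: "n \<le> m \<Longrightarrow> Rr cl n C \<subseteq> Rr cl m C"
  by (induction m) (auto simp: le_Suc_eq)

definition hc :: "((int ^ 'd) set \<Rightarrow> ennreal) \<Rightarrow> ennreal \<Rightarrow> (int ^ 'd) list \<Rightarrow> nat" where
  "hc w \<delta> p = length (filter (\<lambda>e. \<not> w e < \<delta>) (path_edges p))"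

lemma hc_bound_list: fixes w :: "'b \<Rightarrow> ennreal" shows "of_nat (length (filter (\<lambda>e. \<not> w e < \<delta>) es)) * \<delta> \<le> sum_list (map w es)"
proof (induction es)
  case Nil then show ?case by simp
next
  case (Cons e es)
  show ?case
  proof (cases "w e < \<delta>")
    case True then show ?thesis using Cons by (auto intro: add_increasing)
  next
    case False
    then have "\<delta> + of_nat (length (filter (\<lambda>e. \<not> w e < \<delta>) es)) * \<delta> \<le> w e + sum_list (map w es)"
      using Cons by (intro add_mono) auto
    then show ?thesis using False by (simp add: distrib_right)
  qed
qed

lemma hc_bound: "of_nat (hc w \<delta> p) * \<delta> \<le> path_time w p"
  unfolding hc_def path_time_def by (rule hc_bound_list)

lemma path_in_Rr:
  assumes "lattice_path p x y"
  shows "set p \<subseteq> Rr (ocl (\<lambda>e. w e < \<delta>)) (hc w \<delta> p) (ocl (\<lambda>e. w e < \<delta>) x)"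
  using assms
proof (induction p arbitrary: x)
  case Nil then show ?case by (simp add: lattice_path_def)
next
  case (Cons a r)
  note prems = Cons.prems and IH0 = Cons.IH
  let ?cl = "ocl (\<lambda>e. w e < \<delta>)"
  have ax: "a = x" using prems by (simp add: lattice_path_def)
  have xin: "x \<in> Rr ?cl n (?cl x)" for n using Rr_base ocl_self by blast
  show ?case
  proof (cases r)
    case Nil then show ?thesis using ax xin by simp
  next
    case (Cons u r')
    have adj: "lattice_adj x u" and lr: "lattice_path r u y"
      using prems ax Cons by (auto simp: lattice_path_succ)
    have IH: "set r \<subseteq> Rr ?cl (hc w \<delta> r) (?cl u)" using IH0[OF lr] .
    have pe: "path_edges (a # r) = {x, u} # path_edges r" using ax Cons by simp
    show ?thesis
    proof (cases "w {x, u} < \<delta>")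
      case True
      then have "hc w \<delta> (a # r) = hc w \<delta> r" using pe by (simp add: hc_def)
      moreover have "?cl u = ?cl x" using ocl_eq[of x u "\<lambda>e. w e < \<delta>"] adj True by simp
      ultimately show ?thesis using IH ax xin by simp
    next
      case False
      then have h: "hc w \<delta> (a # r) = Suc (hc w \<delta> r)" using pe by (simp add: hc_def)
      have "Rr ?cl (hc w \<delta> r) (?cl u) \<subseteq> Rr ?cl (Suc (hc w \<delta> r)) (?cl x)"
        using adj ocl_self[of x] by auto
      then show ?thesis using IH ax xin h by auto
    qed
  qed
qed

lemma geodesic_exists:
  fixes w :: "(int ^ 'd::finite) set \<Rightarrow> ennreal" and \<delta> :: real
  assumes dpos: "\<delta> > 0" and fin: "\<And>x. finite (ocl (\<lambda>e. w e < ennreal \<delta>) x)"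
    and tfin: "passage_time w x y < \<infinity>"
  shows "\<exists>g. geodesic w g x y"
proof -
  let ?cl = "ocl (\<lambda>e. w e < ennreal \<delta>)"
  define t where "t = passage_time w x y"
  obtain r where r: "t = ennreal r" "r \<ge> 0" using tfin unfolding t_def
    by (cases "passage_time w x y" rule: ennreal_cases) auto
  obtain N :: nat where N: "r + 1 < of_nat N * \<delta>" using ex_less_of_nat_mult[OF dpos] by blast
  have tN: "t + 1 < of_nat N * ennreal \<delta>"
  proof -
    have "t + 1 = ennreal (r + 1)" using r by simp
    also have "\<dots> < ennreal (of_nat N * \<delta>)" using N r dpos by (subst ennreal_less_iff) auto
    also have "\<dots> = of_nat N * ennreal \<delta>" using dpos by (simp add: ennreal_mult ennreal_of_nat_eq_real_of_nat)
    finally show ?thesis .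
  qed
  define V where "V = Rr ?cl N (?cl x)"
  have finV: "finite V" unfolding V_def using fin by (intro Rr_finite) auto
  define S where "S = {g. lattice_path g x y \<and> distinct g \<and> path_time w g < t + 1}"
  have SV: "S \<subseteq> {g. set g \<subseteq> V \<and> length g \<le> card V}"
  proof
    fix g assume g: "g \<in> S"
    have "of_nat (hc w (ennreal \<delta>) g) * ennreal \<delta> < of_nat N * ennreal \<delta>"
      using hc_bound[of w "ennreal \<delta>" g] g tN unfolding S_def by auto
    then have "hc w (ennreal \<delta>) g \<le> N"
    proof (rule contrapos_pp)
      assume "\<not> hc w (ennreal \<delta>) g \<le> N"
      then have "of_nat N \<le> (of_nat (hc w (ennreal \<delta>) g) :: ennreal)" by simp
      then show "\<not> of_nat (hc w (ennreal \<delta>) g) * ennreal \<delta> < of_nat N * ennreal \<delta>"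
        using mult_right_mono[of "of_nat N :: ennreal"] by (simp add: not_less)
    qed
    then have sg: "set g \<subseteq> V" using path_in_Rr[of g x y w "ennreal \<delta>"] g Rr_mono unfolding S_def V_def
      by blast
    moreover have "distinct g" using g unfolding S_def by simp
    ultimately have "length g \<le> card V" using card_mono[OF finV] distinct_card by metis
    then show "g \<in> {g. set g \<subseteq> V \<and> length g \<le> card V}" using sg by simp
  qed
  have finS: "finite S" using finite_subset[OF SV finite_lists_length_le[OF finV]] .
  have t1: "t < t + 1" using r by (simp add: ennreal_plus[symmetric] del: ennreal_plus)
  have erase: "\<exists>g\<in>S. path_time w g \<le> path_time w p" if lp: "lattice_path p x y" and lt: "path_time w p < t + 1" for p
  proof -
    obtain g where "lattice_path g x y \<and> distinct g \<and> set g \<subseteq> set p \<and> path_time w g \<le> path_time w p"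
      using loop_erase[OF lp] by blast
    then show ?thesis using lt unfolding S_def by force
  qed
  obtain p0 where p0: "lattice_path p0 x y" "path_time w p0 < t + 1"
    using t1 unfolding t_def passage_time_def by (auto simp: INF_less_iff)
  have Sne: "S \<noteq> {}" using erase[OF p0] by blast
  define m where "m = Min (path_time w ` S)"
  have "m \<in> path_time w ` S" unfolding m_def using finS Sne by (intro Min_in) auto
  then obtain g0 where g0: "g0 \<in> S" "path_time w g0 = m" by blast
  have mle: "m \<le> path_time w g" if "g \<in> S" for g unfolding m_def using finS that by simp
  have "m \<le> path_time w p" if "lattice_path p x y" for p
  proof (cases "path_time w p < t + 1")
    case True then show ?thesis using erase[OF that True] mle by (meson order_trans)
  next
    case False then show ?thesis using g0 unfolding S_def by auto
  qed
  then have "m \<le> t" unfolding t_def passage_time_def by (auto intro: INF_greatest)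
  moreover have "t \<le> m" using g0 unfolding t_def passage_time_def S_def
    by (auto intro: INF_lower)
  ultimately have "path_time w g0 = passage_time w x y" using g0 t_def by simp
  then show ?thesis using g0 unfolding geodesic_def S_def by blast
qed

lemma countable_edges: "countable (lattice_edges :: (int ^ 'd::finite) set set)"
proof -
  have "lattice_edges \<subseteq> (\<lambda>(x, y). {x, y}) ` (UNIV :: ((int ^ 'd) \<times> (int ^ 'd)) set)"
    unfolding lattice_edges_def by auto
  moreover have "countable ((\<lambda>(x, y). {x, y}) ` (UNIV :: ((int ^ 'd) \<times> (int ^ 'd)) set))"
    by (intro countable_image) simp
  ultimately show ?thesis using countable_subset by blast
qed

lemma space_bond: "space (bond_perc_measure TYPE('d::finite) p) = PiE (lattice_edges :: (int ^ 'd) set set) (\<lambda>_. UNIV)"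
  unfolding bond_perc_measure_def by (simp add: space_PiM)

lemma comp_meas[measurable]:
  "(\<lambda>\<omega>. \<omega> e) \<in> measurable (bond_perc_measure TYPE('d::finite) p) (count_space UNIV)"
proof (cases "e \<in> (lattice_edges :: (int ^ 'd) set set)")
  case True
  have "(\<lambda>\<omega>. \<omega> e) \<in> measurable (bond_perc_measure TYPE('d::finite) p) (measure_pmf (bernoulli_pmf p))"
    unfolding bond_perc_measure_def using True by (rule measurable_component_singleton)
  then show ?thesis by (simp add: measurable_cong_sets)
next
  case False
  have eq: "\<omega> e = undefined" if "\<omega> \<in> space (bond_perc_measure TYPE('d::finite) p)" for \<omega>
    using that False unfolding space_bond by (rule PiE_arb)
  show ?thesis by (subst measurable_cong[OF eq]) simp_all
qed

lemma box_finite: "finite {y :: int ^ 'd::finite. \<forall>i. \<bar>y $ i\<bar> \<le> int n}"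
proof -
  have "{y :: int ^ 'd. \<forall>i. \<bar>y $ i\<bar> \<le> int n} \<subseteq> vec_lambda ` (PiE UNIV (\<lambda>i. {- int n .. int n}))"
  proof
    fix u :: "int ^ 'd" assume "u \<in> {y. \<forall>i. \<bar>y $ i\<bar> \<le> int n}"
    then have b: "\<bar>u $ i\<bar> \<le> int n" for i by simp
    have "u $ i \<in> {- int n .. int n}" for i
    proof -
      have "\<bar>u $ i\<bar> \<le> int n" by (rule b)
      then show ?thesis by (simp add: abs_le_iff)
    qed
    then have "(\<lambda>i. u $ i) \<in> PiE UNIV (\<lambda>i. {- int n .. int n})" by auto
    then show "u \<in> vec_lambda ` (PiE UNIV (\<lambda>i. {- int n .. int n}))"
      by (intro image_eqI[where x="\<lambda>i. u $ i"]) auto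
  qed
  moreover have "finite (PiE (UNIV::'d set) (\<lambda>i. {- int n .. int n}))"
    by (intro finite_PiE) auto
  ultimately show ?thesis using finite_subset by blast
qed

lemma fin_bound:
  fixes S :: "(int ^ 'd::finite) set"
  assumes fin: "finite S" and "y \<in> S"
  shows "\<bar>y $ i\<bar> \<le> int (nat (\<Sum>y\<in>S. \<Sum>i\<in>UNIV. \<bar>y $ i\<bar>))"
proof -
      have "\<bar>y $ i\<bar> \<le> (\<Sum>i\<in>UNIV. \<bar>y $ i\<bar>)" by (rule member_le_sum) auto
      also have "\<dots> \<le> (\<Sum>y\<in>S. \<Sum>i\<in>UNIV. \<bar>y $ i\<bar>)"
        using assms by (intro member_le_sum[where f="\<lambda>y. \<Sum>i\<in>UNIV. \<bar>y $ i\<bar>"]) (auto intro: sum_nonneg)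
      also have "\<dots> \<le> int (nat (\<Sum>y\<in>S. \<Sum>i\<in>UNIV. \<bar>y $ i\<bar>))" by linarith
      finally show ?thesis .
qed

lemma infinite_iff_unbounded:
  "infinite (S :: (int ^ 'd::finite) set) \<longleftrightarrow> (\<forall>n::nat. \<exists>y\<in>S. \<exists>i. \<bar>y $ i\<bar> > int n)"
proof
  assume inf: "infinite S"
  show "\<forall>n::nat. \<exists>y\<in>S. \<exists>i. \<bar>y $ i\<bar> > int n"
  proof (rule ccontr)
    assume "\<not> ?thesis"
    then obtain n :: nat where "\<forall>y\<in>S. \<forall>i. \<bar>y $ i\<bar> \<le> int n" by (auto simp: not_less)
    then have "S \<subseteq> {y. \<forall>i. \<bar>y $ i\<bar> \<le> int n}" by auto
    then show False using inf box_finite finite_subset by blast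
  qed
next
  assume un: "\<forall>n::nat. \<exists>y\<in>S. \<exists>i. \<bar>y $ i\<bar> > int n"
  show "infinite S"
  proof (rule notI)
    assume fin: "finite S"
    have hb: "\<bar>y $ i\<bar> \<le> int (nat (\<Sum>y\<in>S. \<Sum>i\<in>UNIV. \<bar>y $ i\<bar>))" if "y \<in> S" for y i
      using fin_bound[OF fin that] .
    obtain y i where yi: "y \<in> S" "\<bar>y $ i\<bar> > int (nat (\<Sum>y\<in>S. \<Sum>i\<in>UNIV. \<bar>y $ i\<bar>))"
      using un by blast
    have "\<bar>y $ i\<bar> \<le> int (nat (\<Sum>y\<in>S. \<Sum>i\<in>UNIV. \<bar>y $ i\<bar>))" using hb[OF yi(1)] .
    then show False using yi(2) by linarith
  qed
qed

definition Bset :: "'d itself \<Rightarrow> real \<Rightarrow> int ^ 'd \<Rightarrow> ((int ^ 'd::finite) set \<Rightarrow> bool) set" where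
  "Bset d p x = {\<omega> \<in> space (bond_perc_measure d p). infinite (ocl \<omega> x)}"

lemma Bset_sets: "Bset TYPE('d::finite) p x \<in> sets (bond_perc_measure TYPE('d) p)"
proof -
  have eq: "Bset TYPE('d) p x = {\<omega> \<in> space (bond_perc_measure TYPE('d) p).
     \<forall>n::nat. \<exists>y::int ^ 'd. 
       (\<exists>q::(int ^ 'd) list. lattice_path q x y \<and> (\<forall>e\<in>set (path_edges q). \<omega> e)) \<and> (\<exists>i. \<bar>y $ i\<bar> > int n)}"
    unfolding Bset_def infinite_iff_unbounded ocl_def by simp
  show ?thesis unfolding eq by measurable
qed

lemma distr_PiM_compmap:
  fixes I :: "'i set" and N :: "'i \<Rightarrow> 'a measure" and K :: "'i \<Rightarrow> 'b measure"
  assumes I: "I \<noteq> {}" and N: "\<And>i. i \<in> I \<Longrightarrow> prob_space (N i)"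
    and f: "\<And>i. i \<in> I \<Longrightarrow> f i \<in> measurable (N i) (K i)"
  shows "distr (PiM I N) (PiM I K) (\<lambda>x. \<lambda>i\<in>I. f i (x i)) = PiM I (\<lambda>i. distr (N i) (K i) (f i))"
proof -
  interpret P: prob_space "PiM I N" by (rule prob_space_PiM) (rule N)
  have rv: "(\<lambda>x. x i) \<in> measurable (PiM I N) (N i)" if "i \<in> I" for i
    using that by (rule measurable_component_singleton)
  have "distr (PiM I N) (PiM I N) (\<lambda>x. \<lambda>i\<in>I. x i) = distr (PiM I N) (PiM I N) (\<lambda>x. x)"
    by (rule distr_cong) (auto simp: space_PiM PiE_def extensional_def restrict_def fun_eq_iff)
  also have "\<dots> = PiM I N" by simp
  also have "\<dots> = PiM I (\<lambda>i. distr (PiM I N) (N i) (\<lambda>x. x i))"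
    by (intro PiM_cong refl distr_PiM_component[symmetric] N) auto
  finally have "P.indep_vars N (\<lambda>i x. x i) I"
    using P.indep_vars_iff_distr_eq_PiM'[OF I rv] by simp
  then have ind: "P.indep_vars K (\<lambda>i x. f i (x i)) I"
    by (rule P.indep_vars_compose2) (rule f)
  have rv2: "(\<lambda>x. f i (x i)) \<in> measurable (PiM I N) (K i)" if "i \<in> I" for i
    using measurable_comp[OF rv[OF that] f[OF that]] by (simp add: comp_def)
  have "distr (PiM I N) (PiM I K) (\<lambda>x. \<lambda>i\<in>I. f i (x i)) = PiM I (\<lambda>i. distr (PiM I N) (K i) (\<lambda>x. f i (x i)))"
    using P.indep_vars_iff_distr_eq_PiM'[OF I rv2] ind by simp
  also have "\<dots> = PiM I (\<lambda>i. distr (N i) (K i) (f i))"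
  proof (intro PiM_cong refl)
    fix i assume i: "i \<in> I"
    have "distr (PiM I N) (K i) (\<lambda>x. f i (x i)) = distr (distr (PiM I N) (N i) (\<lambda>x. x i)) (K i) (f i)"
      using distr_distr[OF f[OF i] rv[OF i]] by (simp add: comp_def)
    also have "\<dots> = distr (N i) (K i) (f i)" using distr_PiM_component[of I N i] N i by simp
    finally show "distr (PiM I N) (K i) (\<lambda>x. f i (x i)) = distr (N i) (K i) (f i)" .
  qed
  finally show ?thesis .
qed

definition shE :: "int ^ 'd \<Rightarrow> (int ^ 'd::finite) set \<Rightarrow> (int ^ 'd) set" where
  "shE a e = (\<lambda>y. y + a) ` e"

lemma shE_in: "e \<in> lattice_edges \<Longrightarrow> shE a e \<in> lattice_edges"
  unfolding lattice_edges_def shE_def using lattice_adj_shift by fastforce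

lemma shE_inv: "shE (- a) (shE a e) = e" "shE a (shE (- a) e) = e"
  unfolding shE_def by (auto simp: image_image)

lemma path_shift:
  assumes "lattice_path q x y"
  shows "lattice_path (map (\<lambda>y. y + a) q) (x + a) (y + a)"
    "path_edges (map (\<lambda>y. y + a) q) = map (shE a) (path_edges q)"
proof -
  show "lattice_path (map (\<lambda>y. y + a) q) (x + a) (y + a)"
    using assms unfolding lattice_path_succ
    by (auto simp: successively_map lattice_adj_shift hd_map last_map)
  show "path_edges (map (\<lambda>y. y + a) q) = map (shE a) (path_edges q)"
    unfolding path_edges_map shE_def ..
qed

lemma ocl_shift:
  assumes "y \<in> ocl \<omega>' x" "\<forall>e\<in>lattice_edges. \<omega>' e \<longrightarrow> \<omega> (shE a e)"
  shows "y + a \<in> ocl \<omega> (x + a)"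
proof -
  obtain q where q: "lattice_path q x y" "\<forall>e\<in>set (path_edges q). \<omega>' e"
    using assms(1) unfolding ocl_def by blast
  have "\<forall>e\<in>set (path_edges (map (\<lambda>y. y + a) q)). \<omega> e"
    using q assms(2) lattice_path_edges_in[OF q(1)] path_shift(2)[OF q(1)] by auto
  then show ?thesis using path_shift(1)[OF q(1)] unfolding ocl_def by blast
qed

lemma Bset_shift:
  "measure (bond_perc_measure TYPE('d::finite) p) (Bset TYPE('d) p a) =
   measure (bond_perc_measure TYPE('d) p) (Bset TYPE('d) p 0)"
proof -
  let ?E = "lattice_edges :: (int ^ 'd) set set"
  let ?B = "bond_perc_measure TYPE('d) p"
  define \<Psi> :: "((int ^ 'd) set \<Rightarrow> bool) \<Rightarrow> (int ^ 'd) set \<Rightarrow> bool" where "\<Psi> = (\<lambda>\<omega>. \<lambda>n\<in>?E. \<omega> (shE a n))"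
  have dist: "distr ?B ?B \<Psi> = ?B"
    unfolding \<Psi>_def bond_perc_measure_def
    using distr_PiM_reindex[of ?E "\<lambda>_. measure_pmf (bernoulli_pmf p)" "shE a" ?E]
    by (simp add: prob_space_measure_pmf shE_in inj_on_def) (metis shE_inv(1))
  have meas: "\<Psi> \<in> measurable ?B ?B"
    unfolding \<Psi>_def bond_perc_measure_def
    by (intro measurable_restrict measurable_component_singleton shE_in)
  have key: "infinite (ocl \<omega> a) \<longleftrightarrow> infinite (ocl (\<Psi> \<omega>) 0)" for \<omega>
  proof -
    have "ocl \<omega> a = (\<lambda>y. y + a) ` ocl (\<Psi> \<omega>) 0"
    proof
      show "(\<lambda>y. y + a) ` ocl (\<Psi> \<omega>) 0 \<subseteq> ocl \<omega> a"
        using ocl_shift[of _ "\<Psi> \<omega>" 0 \<omega> a] by (auto simp: \<Psi>_def)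
      show "ocl \<omega> a \<subseteq> (\<lambda>y. y + a) ` ocl (\<Psi> \<omega>) 0"
      proof
        fix z assume "z \<in> ocl \<omega> a"
        moreover have "\<forall>e\<in>?E. \<omega> e \<longrightarrow> \<Psi> \<omega> (shE (- a) e)"
          by (auto simp: \<Psi>_def shE_in shE_inv)
        ultimately have "z + - a \<in> ocl (\<Psi> \<omega>) (a + - a)" by (rule ocl_shift)
        then show "z \<in> (\<lambda>y. y + a) ` ocl (\<Psi> \<omega>) 0"
          by (intro image_eqI[where x="z + - a"]) auto
      qed
    qed
    moreover have "inj (\<lambda>y::int ^ 'd. y + a)" by (simp add: inj_on_def)
    ultimately show ?thesis by (simp add: finite_image_iff inj_on_subset)
  qed
  have "Bset TYPE('d) p a = \<Psi> -` Bset TYPE('d) p 0 \<inter> space ?B"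
    using measurable_space[OF meas] key unfolding Bset_def by auto
  then have "measure ?B (Bset TYPE('d) p a) = measure (distr ?B ?B \<Psi>) (Bset TYPE('d) p 0)"
    by (simp add: measure_distr[OF meas Bset_sets])
  then show ?thesis using dist by simp
qed

definition cpl :: "real \<Rightarrow> real \<Rightarrow> (bool \<times> bool) pmf" where
  "cpl q p = bind_pmf (bernoulli_pmf p) (\<lambda>b. map_pmf (\<lambda>a. (a \<and> b, b)) (bernoulli_pmf (q / p)))"

lemma cpl_snd: "map_pmf snd (cpl q p) = bernoulli_pmf p"
  unfolding cpl_def by (simp add: map_bind_pmf map_pmf_comp bind_return_pmf')

lemma cpl_set: "z \<in> set_pmf (cpl q p) \<Longrightarrow> fst z \<longrightarrow> snd z"
  unfolding cpl_def by auto

lemma cpl_fst: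
  assumes "0 \<le> q" "q \<le> p" "0 < p" "p \<le> 1"
  shows "map_pmf fst (cpl q p) = bernoulli_pmf q"
proof -
  have r: "0 \<le> q / p" "q / p \<le> 1" using assms by auto
  have e: "map_pmf fst (cpl q p) = bind_pmf (bernoulli_pmf p) (\<lambda>b. map_pmf (\<lambda>a. a \<and> b) (bernoulli_pmf (q / p)))"
    unfolding cpl_def by (simp add: map_bind_pmf map_pmf_comp)
  have mT: "map_pmf (\<lambda>a. a \<and> True) X = X" for X :: "bool pmf" by (simp add: pmf.map_ident_strong)
  have mF: "map_pmf (\<lambda>a. a \<and> False) X = return_pmf False" for X :: "bool pmf" by simp
  show ?thesis
  proof (rule pmf_eqI)
    fix i :: bool
    have "pmf (map_pmf fst (cpl q p)) i = pmf (bernoulli_pmf (q / p)) i * p + pmf (return_pmf False) i * (1 - p)"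
      unfolding e pmf_bind using assms by (simp add: mT mF)
    also have "\<dots> = pmf (bernoulli_pmf q) i"
      using assms r by (cases i) (auto simp: field_simps)
    finally show "pmf (map_pmf fst (cpl q p)) i = pmf (bernoulli_pmf q) i" .
  qed
qed

lemma edges_ne: "(lattice_edges :: (int ^ 'd::finite) set set) \<noteq> {}"
proof -
  obtain i :: 'd where True by simp
  define v :: "int ^ 'd" where "v = (\<chi> j. if j = i then 1 else 0)"
  have "lattice_adj 0 v" unfolding lattice_adj_def v_def
    by (simp add: if_distrib cong: if_cong)
  then show ?thesis unfolding lattice_edges_def by blast
qed

lemma ocl_mono: "(\<forall>e\<in>lattice_edges. \<omega>1 e \<longrightarrow> \<omega>2 e) \<Longrightarrow> ocl \<omega>1 x \<subseteq> ocl \<omega>2 x"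
  unfolding ocl_def using lattice_path_edges_in by blast

lemma sets_bond: "sets (bond_perc_measure TYPE('d::finite) r) = sets (PiM (lattice_edges :: (int ^ 'd) set set) (\<lambda>_. count_space UNIV))"
  unfolding bond_perc_measure_def by (intro sets_PiM_cong) auto

lemma Bset_mono:
  assumes "0 \<le> q" "q < p" "p \<le> 1"
  shows "measure (bond_perc_measure TYPE('d::finite) q) (Bset TYPE('d) q x)
     \<le> measure (bond_perc_measure TYPE('d) p) (Bset TYPE('d) p x)"
proof -
  let ?E = "lattice_edges :: (int ^ 'd) set set"
  let ?c = "cpl q p"
  let ?Pc = "PiM ?E (\<lambda>_. measure_pmf ?c)"
  let ?C = "PiM ?E (\<lambda>_. count_space (UNIV :: bool set))"
  define F1 :: "((int ^ 'd) set \<Rightarrow> bool \<times> bool) \<Rightarrow> (int ^ 'd) set \<Rightarrow> bool" where "F1 = (\<lambda>z. \<lambda>e\<in>?E. fst (z e))"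
  define F2 :: "((int ^ 'd) set \<Rightarrow> bool \<times> bool) \<Rightarrow> (int ^ 'd) set \<Rightarrow> bool" where "F2 = (\<lambda>z. \<lambda>e\<in>?E. snd (z e))"
  interpret P: prob_space ?Pc by (intro prob_space_PiM prob_space_measure_pmf)
  have m1: "F1 \<in> measurable ?Pc ?C" unfolding F1_def
  proof (intro measurable_restrict)
    fix e assume "e \<in> ?E"
    then have "(\<lambda>x. x e) \<in> measurable ?Pc (measure_pmf ?c)" by (rule measurable_component_singleton)
    moreover have "fst \<in> measurable (measure_pmf ?c) (count_space UNIV)" by simp
    ultimately show "(\<lambda>x. fst (x e)) \<in> measurable ?Pc (count_space UNIV)" by (rule measurable_compose)
  qed
  have m2: "F2 \<in> measurable ?Pc ?C" unfolding F2_def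
  proof (intro measurable_restrict)
    fix e assume "e \<in> ?E"
    then have "(\<lambda>x. x e) \<in> measurable ?Pc (measure_pmf ?c)" by (rule measurable_component_singleton)
    moreover have "snd \<in> measurable (measure_pmf ?c) (count_space UNIV)" by simp
    ultimately show "(\<lambda>x. snd (x e)) \<in> measurable ?Pc (count_space UNIV)" by (rule measurable_compose)
  qed
  have d1: "distr ?Pc ?C F1 = bond_perc_measure TYPE('d) q"
  proof -
    have "distr ?Pc ?C F1 = PiM ?E (\<lambda>_. distr (measure_pmf ?c) (count_space UNIV) fst)"
      unfolding F1_def by (rule distr_PiM_compmap[OF edges_ne]) (auto intro: prob_space_measure_pmf)
    also have "\<dots> = PiM ?E (\<lambda>_. measure_pmf (bernoulli_pmf q))"
      using cpl_fst[of q p] assms by (simp add: map_pmf_rep_eq[symmetric])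
    finally show ?thesis unfolding bond_perc_measure_def .
  qed
  have d2: "distr ?Pc ?C F2 = bond_perc_measure TYPE('d) p"
  proof -
    have "distr ?Pc ?C F2 = PiM ?E (\<lambda>_. distr (measure_pmf ?c) (count_space UNIV) snd)"
      unfolding F2_def by (rule distr_PiM_compmap[OF edges_ne]) (auto intro: prob_space_measure_pmf)
    also have "\<dots> = PiM ?E (\<lambda>_. measure_pmf (bernoulli_pmf p))"
      using cpl_snd[of q p] by (simp add: map_pmf_rep_eq[symmetric])
    finally show ?thesis unfolding bond_perc_measure_def .
  qed
  have B1: "Bset TYPE('d) q x \<in> sets ?C" using Bset_sets sets_bond by blast
  have B2: "Bset TYPE('d) p x \<in> sets ?C" using Bset_sets sets_bond by blast
  have AEc: "AE z in ?Pc. \<forall>e\<in>?E. z e \<in> set_pmf ?c"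
    using countable_edges
    by (subst AE_ball_countable) (auto intro!: AE_PiM_component prob_space_measure_pmf AE_measure_pmf)
  have "AE z in ?Pc. z \<in> F1 -` Bset TYPE('d) q x \<inter> space ?Pc \<longrightarrow> z \<in> F2 -` Bset TYPE('d) p x \<inter> space ?Pc"
    using AEc
  proof (rule AE_mp, intro AE_I2 impI)
    fix z assume z: "z \<in> space ?Pc" "\<forall>e\<in>?E. z e \<in> set_pmf ?c" "z \<in> F1 -` Bset TYPE('d) q x \<inter> space ?Pc"
    have "\<forall>e\<in>?E. F1 z e \<longrightarrow> F2 z e" using z(2) cpl_set[of "z e" q p for e] unfolding F1_def F2_def by auto
    then have "ocl (F1 z) x \<subseteq> ocl (F2 z) x" by (rule ocl_mono)
    moreover have "infinite (ocl (F1 z) x)" using z(3) unfolding Bset_def by auto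
    ultimately have "infinite (ocl (F2 z) x)" using finite_subset by blast
    moreover have "F2 z \<in> space (bond_perc_measure TYPE('d) p)"
      unfolding space_bond F2_def by auto
    ultimately show "z \<in> F2 -` Bset TYPE('d) p x \<inter> space ?Pc" using z(1) unfolding Bset_def by auto
  qed
  then have "P.prob (F1 -` Bset TYPE('d) q x \<inter> space ?Pc) \<le> P.prob (F2 -` Bset TYPE('d) p x \<inter> space ?Pc)"
    by (rule P.finite_measure_mono_AE) (rule measurable_sets[OF m2 B2])
  then show ?thesis
    using measure_distr[OF m1 B1] measure_distr[OF m2 B2] d1 d2 by simp
qed

lemma perc_prob_Bset: "perc_prob TYPE('d::finite) p = measure (bond_perc_measure TYPE('d) p) (Bset TYPE('d) p 0)"
  unfolding perc_prob_def Bset_def open_cluster_def ocl_def ..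

lemma Bset_null_measure:
  assumes "measure (bond_perc_measure TYPE('d::finite) p) (Bset TYPE('d) p x) = 0"
  shows "AE \<omega> in bond_perc_measure TYPE('d) p. \<omega> \<notin> Bset TYPE('d) p x"
proof -
  interpret prob_space "bond_perc_measure TYPE('d) p"
    unfolding bond_perc_measure_def by (intro prob_space_PiM prob_space_measure_pmf)
  have "emeasure (bond_perc_measure TYPE('d) p) (Bset TYPE('d) p x) = 0"
    using assms by (simp add: emeasure_eq_measure)
  then have "Bset TYPE('d) p x \<in> null_sets (bond_perc_measure TYPE('d) p)"
    using Bset_sets by (auto simp: null_sets_def)
  then show ?thesis by (rule AE_not_in)
qed

lemma perc_prob_0: "perc_prob TYPE('d::finite) 0 = 0"
proof -
  let ?E = "lattice_edges :: (int ^ 'd) set set"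
  let ?B = "bond_perc_measure TYPE('d) 0"
  have "AE \<omega> in ?B. \<forall>e\<in>?E. \<not> \<omega> e"
    unfolding bond_perc_measure_def using countable_edges
    by (subst AE_ball_countable) (auto intro!: AE_PiM_component prob_space_measure_pmf
         simp: AE_measure_pmf_iff set_pmf_iff)
  then have "AE \<omega> in ?B. \<omega> \<notin> Bset TYPE('d) 0 0"
  proof (rule AE_mp, intro AE_I2 impI)
    fix \<omega> assume cl: "\<forall>e\<in>?E. \<not> \<omega> e"
    have "ocl \<omega> 0 \<subseteq> {0}"
    proof
      fix y assume "y \<in> ocl \<omega> 0"
      then obtain q where q: "lattice_path q 0 y" "\<forall>e\<in>set (path_edges q). \<omega> e"
        unfolding ocl_def by blast
      have "set (path_edges q) = {}" 
      proof (rule ccontr)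
        assume "set (path_edges q) \<noteq> {}"
        then obtain e where e: "e \<in> set (path_edges q)" by (meson ex_in_conv)
        then have "e \<in> lattice_edges" "\<omega> e" using q(2) lattice_path_edges_in[OF q(1)] by auto
        then show False using cl by auto
      qed
      then have "q = [0]" using q(1) unfolding lattice_path_def
        by (cases q rule: list.exhaust; cases "tl q") auto
      then show "y \<in> {0}" using q(1) unfolding lattice_path_def by simp
    qed
    then have "finite (ocl \<omega> 0)" using finite_subset by blast
    then show "\<omega> \<notin> Bset TYPE('d) 0 0" unfolding Bset_def by simp
  qed
  then have "Bset TYPE('d) 0 0 \<in> null_sets ?B"
    using AE_iff_null_sets[OF Bset_sets] by blast
  then show ?thesis unfolding perc_prob_Bset by (simp add: measure_def null_setsD1)
qed

lemma bern_eq: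
  fixes L :: "ennreal measure"
  assumes "prob_space L" "sets L = sets borel"
  shows "distr L (count_space UNIV) (\<lambda>w. w < c) = measure_pmf (bernoulli_pmf (measure L {w. w < c}))"
proof -
  interpret prob_space L by fact
  let ?q = "measure L {w. w < c}"
  have sp: "space L = UNIV" using sets_eq_imp_space_eq[OF assms(2)] by simp
  have A: "{w. w < c} \<in> sets L" using assms(2) borel_open[OF open_lessThan[of c]] by (simp add: lessThan_def)
  have q: "0 \<le> ?q" "?q \<le> 1" by auto
  have mc: "(\<lambda>w. w < c) \<in> measurable L (count_space UNIV)"
    by (subst measurable_cong_sets[OF assms(2) refl]) measurable
  show ?thesis
  proof (rule measure_eqI_countable[where A=UNIV])
    fix a :: bool
    show "emeasure (distr L (count_space UNIV) (\<lambda>w. w < c)) {a} = emeasure (measure_pmf (bernoulli_pmf ?q)) {a}"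
    proof (cases a)
      case True
      have "emeasure (distr L (count_space UNIV) (\<lambda>w. w < c)) {a} = emeasure L {w. w < c}"
        using True by (subst emeasure_distr[OF mc]) (auto simp: sp vimage_def)
      then show ?thesis using True q by (simp add: emeasure_pmf_single emeasure_eq_measure)
    next
      case False
      have "emeasure (distr L (count_space UNIV) (\<lambda>w. w < c)) {a} = emeasure L (space L - {w. w < c})"
        using False by (subst emeasure_distr[OF mc]) (auto simp: sp vimage_def set_diff_eq)
      also have "\<dots> = ennreal (1 - ?q)" using prob_compl[OF A] by (simp add: emeasure_eq_measure)
      finally show ?thesis using False q by (simp add: emeasure_pmf_single)
    qed
  qed auto
qed

theorem propositionA1:
  fixes M :: "'a measure" and L :: "ennreal measure"
    and T :: "(int ^ 'd) set \<Rightarrow> 'a \<Rightarrow> ennreal"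
  assumes "CARD('d) \<ge> 2"
    and "prob_space M"
    and "prob_space.indep_vars M (\<lambda>_. borel) T (lattice_edges :: (int ^ 'd) set set)"
    and "\<forall>e \<in> lattice_edges. distr M borel (T e) = L"
    and "measure L {0} < crit_prob TYPE('d)"
  shows "AE \<omega> in M. \<forall>x y. passage_time (\<lambda>e. T e \<omega>) x y < \<infinity> \<longrightarrow>
            (\<exists>g. geodesic (\<lambda>e. T e \<omega>) g x y)"
proof -
  interpret M: prob_space M by fact
  let ?E = "lattice_edges :: (int ^ 'd) set set"
  have rvT: "T e \<in> measurable M borel" if "e \<in> ?E" for e
    using assms(3) that unfolding M.indep_vars_def by auto
  obtain e0 where e0: "e0 \<in> ?E" using edges_ne by blast
  have Ld: "L = distr M borel (T e0)" using assms(4) e0 by simp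
  have probL: "prob_space L" unfolding Ld by (rule M.prob_space_distr[OF rvT[OF e0]])
  interpret L: prob_space L by fact
  have setsL: "sets L = sets borel" unfolding Ld by simp
  define A :: "nat \<Rightarrow> ennreal set" where "A n = {w. w < ennreal (1 / Suc n)}" for n
  have Asets: "range A \<subseteq> sets L"
  proof
    fix X assume "X \<in> range A"
    then obtain n where "X = A n" by blast
    then show "X \<in> sets L" unfolding A_def setsL
      using borel_open[OF open_lessThan[of "ennreal (1 / Suc n)"]] by (simp add: lessThan_def)
  qed
  have Adec: "decseq A"
  proof (rule decseq_SucI)
    fix n
    have le: "ennreal (1 / Suc (Suc n)) \<le> ennreal (1 / Suc n)"
      by (intro ennreal_leI) (simp add: frac_le)
    show "A (Suc n) \<subseteq> A n" unfolding A_def subset_iff mem_Collect_eq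
      using le order_less_le_trans by blast
  qed
  have Aint: "(\<Inter>n. A n) = {0}"
  proof (intro set_eqI iffI)
    fix w assume w: "w \<in> (\<Inter>n. A n)"
    show "w \<in> {0}"
    proof (rule ccontr)
      assume "w \<notin> {0}"
      then have wpos: "w > 0" by (simp add: zero_less_iff_neq_zero)
      show False
      proof (cases w rule: ennreal_cases)
        case top
        then show False using w by (auto simp: A_def)
      next
        case (real r)
        then have "r > 0" using wpos by simp
        then obtain n where "inverse (real (Suc n)) < r" using reals_Archimedean by blast
        then have "ennreal (1 / Suc n) < w" using real by (simp add: ennreal_less_iff divide_inverse)
        moreover have "w < ennreal (1 / Suc n)" using w by (auto simp: A_def)
        ultimately show False by simp
      qed
    qed
  next
    fix w assume "w \<in> {0 :: ennreal}"
    then show "w \<in> (\<Inter>n. A n)" by (auto simp: A_def)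
  qed
  have "(\<lambda>n. measure L (A n)) \<longlonglongrightarrow> measure L {0}"
    using L.finite_Lim_measure_decseq[OF Asets Adec] Aint by simp
  then have "eventually (\<lambda>n. measure L (A n) < crit_prob TYPE('d)) sequentially"
    using assms(5) by (rule order_tendstoD(2))
  then obtain n where n: "measure L (A n) < crit_prob TYPE('d)"
    by (auto simp: eventually_sequentially)
  define \<delta> :: real where "\<delta> = 1 / Suc n"
  have dpos: "\<delta> > 0" unfolding \<delta>_def by simp
  define q where "q = measure L {w. w < ennreal \<delta>}"
  have qA: "q = measure L (A n)" unfolding q_def A_def \<delta>_def ..
  have q01: "0 \<le> q" "q \<le> 1" unfolding q_def by auto
  define S where "S = {p. 0 \<le> p \<and> p \<le> 1 \<and> perc_prob TYPE('d) p = 0}"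
  have Sne: "S \<noteq> {}" 
  proof -
    have "(0::real) \<in> S" unfolding S_def using perc_prob_0[where 'd='d] by simp
    then show ?thesis by blast
  qed
  have Sbdd: "bdd_above S" unfolding S_def by (auto intro: bdd_aboveI[where M=1])
  have "q < Sup S" using n qA unfolding crit_prob_def S_def by simp
  then obtain p where p: "p \<in> S" "q < p" using less_cSup_iff[OF Sne Sbdd] by blast
  have p01: "0 \<le> p" "p \<le> 1" "perc_prob TYPE('d) p = 0" using p(1) unfolding S_def by auto
  have "measure (bond_perc_measure TYPE('d) q) (Bset TYPE('d) q x) = 0" for x
  proof -
    have "measure (bond_perc_measure TYPE('d) q) (Bset TYPE('d) q x)
       \<le> measure (bond_perc_measure TYPE('d) p) (Bset TYPE('d) p x)"
      using Bset_mono q01 p(2) p01 by blast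
    also have "\<dots> = measure (bond_perc_measure TYPE('d) p) (Bset TYPE('d) p 0)" by (rule Bset_shift)
    also have "\<dots> = 0" using p01(3) perc_prob_Bset by metis
    finally show ?thesis by (simp add: measure_le_0_iff)
  qed
  then have "\<forall>x. AE \<omega> in bond_perc_measure TYPE('d) q. \<omega> \<notin> Bset TYPE('d) q x"
    using Bset_null_measure by blast
  then have AEq: "AE \<omega> in bond_perc_measure TYPE('d) q. \<forall>x. finite (ocl \<omega> x)"
    by (subst (asm) AE_all_countable[symmetric]) (auto elim: AE_mp simp: Bset_def)
  define \<Phi> :: "'a \<Rightarrow> (int ^ 'd) set \<Rightarrow> bool" where "\<Phi> = (\<lambda>\<omega>. \<lambda>e\<in>?E. T e \<omega> < ennreal \<delta>)"
  have mlt: "(\<lambda>w::ennreal. w < ennreal \<delta>) \<in> measurable borel (count_space UNIV)" by measurable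
  have ind: "M.indep_vars (\<lambda>_. count_space UNIV) (\<lambda>e \<omega>. T e \<omega> < ennreal \<delta>) ?E"
    using M.indep_vars_compose2[OF assms(3), of "\<lambda>_ w. w < ennreal \<delta>" "\<lambda>_. count_space UNIV"] mlt by simp
  have rv: "(\<lambda>\<omega>. T e \<omega> < ennreal \<delta>) \<in> measurable M (count_space UNIV)" if "e \<in> ?E" for e
    using measurable_compose[OF rvT[OF that] mlt] .
  have "distr M (PiM ?E (\<lambda>_. count_space UNIV)) \<Phi> = PiM ?E (\<lambda>e. distr M (count_space UNIV) (\<lambda>\<omega>. T e \<omega> < ennreal \<delta>))"
    using M.indep_vars_iff_distr_eq_PiM'[where I = ?E and M' = "\<lambda>_. count_space UNIV"
        and X = "\<lambda>e \<omega>. T e \<omega> < ennreal \<delta>", OF edges_ne rv] ind unfolding \<Phi>_def by simp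
  also have "\<dots> = PiM ?E (\<lambda>_. measure_pmf (bernoulli_pmf q))"
  proof (intro PiM_cong refl)
    fix e assume e: "e \<in> ?E"
    have "distr M (count_space UNIV) (\<lambda>\<omega>. T e \<omega> < ennreal \<delta>) = distr (distr M borel (T e)) (count_space UNIV) (\<lambda>w. w < ennreal \<delta>)"
      using distr_distr[OF mlt rvT[OF e]] by (simp add: comp_def)
    also have "\<dots> = distr L (count_space UNIV) (\<lambda>w. w < ennreal \<delta>)" using assms(4) e by simp
    also have "\<dots> = measure_pmf (bernoulli_pmf q)" unfolding q_def by (rule bern_eq[OF probL setsL])
    finally show "distr M (count_space UNIV) (\<lambda>\<omega>. T e \<omega> < ennreal \<delta>) = measure_pmf (bernoulli_pmf q)" .
  qed
  finally have dPhi: "distr M (PiM ?E (\<lambda>_. count_space UNIV)) \<Phi> = bond_perc_measure TYPE('d) q"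
    unfolding bond_perc_measure_def .
  have mPhi: "\<Phi> \<in> measurable M (PiM ?E (\<lambda>_. count_space UNIV))"
    unfolding \<Phi>_def by (intro measurable_restrict rv)
  have "AE \<omega> in M. \<forall>x. finite (ocl (\<Phi> \<omega>) x)"
    using AE_distrD[OF mPhi] AEq unfolding dPhi by blast
  then show ?thesis
  proof (rule AE_mp, intro AE_I2 impI allI)
    fix \<omega> x y
    assume fin: "\<forall>x. finite (ocl (\<Phi> \<omega>) x)" and t: "passage_time (\<lambda>e. T e \<omega>) x y < \<infinity>"
    have key: "(\<forall>e\<in>set (path_edges q). \<Phi> \<omega> e) = (\<forall>e\<in>set (path_edges q). T e \<omega> < ennreal \<delta>)"
      if "lattice_path q z u" for q z u
    proof (intro ball_cong refl)
      fix e assume "e \<in> set (path_edges q)"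
      then have "e \<in> ?E" using lattice_path_edges_in[OF that] by blast
      then show "\<Phi> \<omega> e = (T e \<omega> < ennreal \<delta>)" unfolding \<Phi>_def by simp
    qed
    have "ocl (\<Phi> \<omega>) z = ocl (\<lambda>e. T e \<omega> < ennreal \<delta>) z" for z
    proof (rule set_eqI)
      fix u
      show "u \<in> ocl (\<Phi> \<omega>) z \<longleftrightarrow> u \<in> ocl (\<lambda>e. T e \<omega> < ennreal \<delta>) z"
        unfolding ocl_def mem_Collect_eq using key[of _ z u] by blast
    qed
    then have "\<And>z. finite (ocl (\<lambda>e. T e \<omega> < ennreal \<delta>) z)" using fin by simp
    then show "\<exists>g. geodesic (\<lambda>e. T e \<omega>) g x y" using geodesic_exists[OF dpos _ t] by blast
  qed
qed

end
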